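(* Let $f\in\mathbb{R}[X_1,\dots,X_n]$ be a form (homogeneous polynomial) of degree $2d$. Suppose there exist nonnegative real numbers $a_{\alpha,i}$, for $\alpha\in\Delta$ and $i=1,\dots,n$, such that, writing $a_\alpha:=(a_{\alpha,1},\dots,a_{\alpha,n})$, (1) for every $\alpha\in\Delta$: $(2d)^{2d}a_{\alpha}^{\alpha}=f_{\alpha}^{2d}\alpha^{\alpha}$; and (2) $f_{2d,i}\ge\sum_{\alpha\in\Delta}a_{\alpha,i}$ for $i=1,\dots,n$. Then $f$ is SOBS.
   Context: $\mathbb{N}=\{0,1,2,\dots\}$, $n\ge1$, $\underline{X}=(X_1,\dots,X_n)$. For $\alpha\in\mathbb{N}^n$ write $\underline{X}^\alpha=X_1^{\alpha_1}\cdots X_n^{\alpha_n}$, $|\alpha|=\alpha_1+\cdots+\alpha_n$, and for $a=(a_1,\dots,a_n)\in\mathbb{R}^n$ write $a^\alpha=\prod_{i=1}^n a_i^{\alpha_i}$ with the convention $0^0=1$ (so $\alpha^\alpha=\prod_i\alpha_i^{\alpha_i}$). For $f=\sum_\alpha f_\alpha\underline{X}^\alpha$ of degree $2d$, let $\epsilon_i$ be the $i$-th standard unit vector, $f_{2d,i}:=f_{2d\epsilon_i}$ (the coefficient of $X_i^{2d}$), $\Omega=\{\alpha\in\mathbb{N}^n: f_\alpha\ne0\}\setminus\{\underline{0},2d\epsilon_1,\dots,2d\epsilon_n\}$, and $\Delta=\{\alpha\in\Omega:\ f_\alpha<0\text{ or }\alpha_i\text{ is odd for some }i\}$ (the $\alpha\in\Omega$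 for which $f_\alpha\underline{X}^\alpha$ is not a square). A polynomial is SOBS (a sum of binomial squares) if it is a finite sum of squares of polynomials of the form $a\underline{X}^\alpha-b\underline{X}^\beta$ with $a,b\in\mathbb{R}$, $\alpha,\beta\in\mathbb{N}^n$. *)

theory Defs
  imports Complex_Main "HOL-Library.Poly_Mapping"
begin

text \<open>Multivariate real polynomials in variables X_0, ..., X_(n-1) are represented as
  finitely supported maps from exponent vectors to coefficients;
  multiplication is the convolution product of Poly_Mapping.
  The monomial a X^alpha is Poly_Mapping.single alpha a.\<close>

type_synonym mpoly = "(nat \<Rightarrow>\<^sub>0 nat) \<Rightarrow>\<^sub>0 real"

definition mdeg :: "(nat \<Rightarrow>\<^sub>0 nat) \<Rightarrow> nat" where
  "mdeg \<alpha> = (\<Sum>i\<in>Poly_Mapping.keys \<alpha>. Poly_Mapping.lookup \<alpha> i)"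

definition in_vars :: "nat \<Rightarrow> (nat \<Rightarrow>\<^sub>0 nat) \<Rightarrow> bool" where
  "in_vars n \<alpha> \<longleftrightarrow> Poly_Mapping.keys \<alpha> \<subseteq> {..<n}"

definition is_poly_in :: "nat \<Rightarrow> mpoly \<Rightarrow> bool" where
  "is_poly_in n f \<longleftrightarrow> (\<forall>\<alpha>\<in>Poly_Mapping.keys f. in_vars n \<alpha>)"

definition is_form :: "nat \<Rightarrow> mpoly \<Rightarrow> bool" where
  "is_form k f \<longleftrightarrow> (\<forall>\<alpha>\<in>Poly_Mapping.keys f. mdeg \<alpha> = k)"

text \<open>Omega and Delta of the paper (variables indexed 0..n-1)\<close>
definition Omega :: "nat \<Rightarrow> nat \<Rightarrow> mpoly \<Rightarrow> (nat \<Rightarrow>\<^sub>0 nat) set" where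
  "Omega n d f = Poly_Mapping.keys f - ({0} \<union> {Poly_Mapping.single i (2*d) | i. i < n})"

definition Delta :: "nat \<Rightarrow> nat \<Rightarrow> mpoly \<Rightarrow> (nat \<Rightarrow>\<^sub>0 nat) set" where
  "Delta n d f = {\<alpha>\<in>Omega n d f. Poly_Mapping.lookup f \<alpha> < 0 \<or> (\<exists>i. odd (Poly_Mapping.lookup \<alpha> i))}"

text \<open>a^alpha = prod_i a_i^alpha_i, with 0^0 = 1 (as for Isabelle's power)\<close>
definition vpow :: "nat \<Rightarrow> (nat \<Rightarrow> real) \<Rightarrow> (nat \<Rightarrow>\<^sub>0 nat) \<Rightarrow> real" where
  "vpow n a \<alpha> = (\<Prod>i<n. a i ^ Poly_Mapping.lookup \<alpha> i)"

definition SOBS :: "nat \<Rightarrow> mpoly \<Rightarrow> bool" where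
  "SOBS n f \<longleftrightarrow> (\<exists>L :: (real \<times> (nat \<Rightarrow>\<^sub>0 nat) \<times> real \<times> (nat \<Rightarrow>\<^sub>0 nat)) list.
     (\<forall>(a, \<alpha>, b, \<beta>)\<in>set L. in_vars n \<alpha> \<and> in_vars n \<beta>) \<and>
     f = (\<Sum>(a, \<alpha>, b, \<beta>)\<leftarrow>L. (Poly_Mapping.single \<alpha> a - Poly_Mapping.single \<beta> b)^2))"

end

theory Submission
  imports Defs
begin


lemma SOBS_0: "SOBS n 0"
  unfolding SOBS_def by (rule exI[of _ "[]"]) simp

lemma SOBS_add: "SOBS n p \<Longrightarrow> SOBS n q \<Longrightarrow> SOBS n (p + q)"
  unfolding SOBS_def
proof (elim exE conjE)
  fix L1 L2
  assume "\<forall>(a, \<alpha>, b, \<beta>)\<in>set L1. in_vars n \<alpha> \<and> in_vars n \<beta>"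
     "p = (\<Sum>(a, \<alpha>, b, \<beta>)\<leftarrow>L1. (Poly_Mapping.single \<alpha> a - Poly_Mapping.single \<beta> b)^2)"
     "\<forall>(a, \<alpha>, b, \<beta>)\<in>set L2. in_vars n \<alpha> \<and> in_vars n \<beta>"
     "q = (\<Sum>(a, \<alpha>, b, \<beta>)\<leftarrow>L2. (Poly_Mapping.single \<alpha> a - Poly_Mapping.single \<beta> b)^2)"
  then show "\<exists>L. (\<forall>(a, \<alpha>, b, \<beta>)\<in>set L. in_vars n \<alpha> \<and> in_vars n \<beta>) \<and>
     p + q = (\<Sum>(a, \<alpha>, b, \<beta>)\<leftarrow>L. (Poly_Mapping.single \<alpha> a - Poly_Mapping.single \<beta> b)^2)"
    by (intro exI[of _ "L1 @ L2"]) auto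
qed

lemma SOBS_sum: "(\<And>x. x \<in> A \<Longrightarrow> SOBS n (g x)) \<Longrightarrow> SOBS n (sum g A)"
  by (induction A rule: infinite_finite_induct) (auto intro: SOBS_0 SOBS_add)

lemma SOBS_nat: "SOBS n p \<Longrightarrow> SOBS n (of_nat k * p)"
proof (induction k)
  case 0 then show ?case using SOBS_0 by simp
next
  case (Suc k)
  have "of_nat (Suc k) * p = p + of_nat k * p"
    by (simp only: of_nat_Suc distrib_right mult_1_left add.commute)
  then show ?case using Suc SOBS_add by metis
qed

lemma SOBS_bin: "in_vars n \<alpha> \<Longrightarrow> in_vars n \<beta> \<Longrightarrow>
   SOBS n ((Poly_Mapping.single \<alpha> a - Poly_Mapping.single \<beta> b)^2)"
  unfolding SOBS_def
  apply (rule exI[of _ "[(a,\<alpha>,b,\<beta>)]"])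
  apply (simp only: list.set list.map sum_list.Cons sum_list.Nil add_0_right case_prod_conv)
  by blast

lemma in_vars_add: "in_vars n \<alpha> \<Longrightarrow> in_vars n \<beta> \<Longrightarrow> in_vars n (\<alpha> + \<beta>)"
  unfolding in_vars_def using keys_add[of \<alpha> \<beta>] by (meson Un_least order_trans)

lemma in_vars_0: "in_vars n 0"
  unfolding in_vars_def by simp

lemma SOBS_mulsq:
  assumes "SOBS n p" "in_vars n \<gamma>"
  shows "SOBS n ((Poly_Mapping.single \<gamma> c)^2 * p)"
proof -
  obtain L where L: "\<forall>(a, \<alpha>, b, \<beta>)\<in>set L. in_vars n \<alpha> \<and> in_vars n \<beta>"
     "p = (\<Sum>(a, \<alpha>, b, \<beta>)\<leftarrow>L. (Poly_Mapping.single \<alpha> a - Poly_Mapping.single \<beta> b)^2)"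
    using assms(1) unfolding SOBS_def by blast
  define M where "M = map (\<lambda>(a, \<alpha>, b, \<beta>). (c*a, \<gamma>+\<alpha>, c*b, \<gamma>+\<beta>)) L"
  have "(Poly_Mapping.single \<gamma> c)^2 * p = (\<Sum>(a, \<alpha>, b, \<beta>)\<leftarrow>M. (Poly_Mapping.single \<alpha> a - Poly_Mapping.single \<beta> b)^2)"
    unfolding L(2) M_def
  proof (induction L)
    case (Cons x L)
    obtain a \<alpha> b \<beta> where x: "x = (a,\<alpha>,b,\<beta>)" by (cases x) auto
    have "(Poly_Mapping.single \<gamma> c)^2 * (Poly_Mapping.single \<alpha> a - Poly_Mapping.single \<beta> b)^2
       = (Poly_Mapping.single \<gamma> c * Poly_Mapping.single \<alpha> a - Poly_Mapping.single \<gamma> c * Poly_Mapping.single \<beta> b)^2"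
      by (simp add: power2_eq_square algebra_simps)
    also have "\<dots> = (Poly_Mapping.single (\<gamma>+\<alpha>) (c*a) - Poly_Mapping.single (\<gamma>+\<beta>) (c*b))^2"
      by (simp add: mult_single)
    finally show ?case using Cons by (simp add: x distrib_left)
  qed simp
  moreover have "\<forall>(a, \<alpha>, b, \<beta>)\<in>set M. in_vars n \<alpha> \<and> in_vars n \<beta>"
    using L(1) assms(2) unfolding M_def by (auto intro: in_vars_add)
  ultimately show ?thesis unfolding SOBS_def by blast
qed

lemma SOBS_scale:
  assumes "SOBS n p" "c \<ge> 0"
  shows "SOBS n (Poly_Mapping.single 0 c * p)"
proof -
  have e: "(Poly_Mapping.single 0 (sqrt c))^2 = Poly_Mapping.single 0 c"
    using assms(2) by (simp add: power2_eq_square mult_single)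
  have "SOBS n ((Poly_Mapping.single 0 (sqrt c))^2 * p)" by (rule SOBS_mulsq[OF assms(1) in_vars_0])
  then show ?thesis by (simp only: e)
qed

lemma SOBS_div:
  assumes "k > 0" "SOBS n (of_nat k * p)"
  shows "SOBS n p"
proof -
  have e: "Poly_Mapping.single 0 (1 / real k) * (of_nat k * p) = p"
  proof -
    have "Poly_Mapping.single 0 (1 / real k) * (of_nat k * p) = (Poly_Mapping.single 0 (1 / real k) * Poly_Mapping.single 0 (real k)) * p"
      by (simp only: single_of_nat mult.assoc)
    also have "\<dots> = p" using assms(1) by (simp add: mult_single del: single_of_nat)
    finally show ?thesis .
  qed
  moreover have "SOBS n (Poly_Mapping.single 0 (1 / real k) * (of_nat k * p))"
    by (rule SOBS_scale[OF assms(2)]) simp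
  ultimately show ?thesis by (simp only: e)
qed



context
  fixes P :: "'a::comm_ring_1 \<Rightarrow> bool" and T :: "'a set"
  assumes P0: "P 0" and Padd: "\<And>a b. P a \<Longrightarrow> P b \<Longrightarrow> P (a + b)"
    and Pdiv: "\<And>k a. k > 0 \<Longrightarrow> P (of_nat k * a) \<Longrightarrow> P a"
    and Pmul: "\<And>w a. w \<in> T \<Longrightarrow> P a \<Longrightarrow> P (w^2 * a)"
    and Pbin: "\<And>v w. v \<in> T \<Longrightarrow> w \<in> T \<Longrightarrow> P ((v - w)^2)"
    and T1: "1 \<in> T" and Tmul: "\<And>v w. v \<in> T \<Longrightarrow> w \<in> T \<Longrightarrow> v * w \<in> T"
begin

lemma Psum: "(\<And>x. x \<in> A \<Longrightarrow> P (g x)) \<Longrightarrow> P (sum g A)"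
  by (induction A rule: infinite_finite_induct) (auto intro: P0 Padd)

lemma Pnat: "P a \<Longrightarrow> P (of_nat k * a)"
proof (induction k)
  case 0 then show ?case using P0 by simp
next
  case (Suc k)
  have "of_nat (Suc k) * a = a + of_nat k * a" by (simp add: algebra_simps)
  then show ?case using Suc Padd by metis
qed

lemma Tpow: "v \<in> T \<Longrightarrow> v ^ k \<in> T"
  by (induction k) (auto intro: T1 Tmul)

lemma Tprod: "(\<And>x. x \<in> A \<Longrightarrow> g x \<in> T) \<Longrightarrow> prod g A \<in> T"
  by (induction A rule: infinite_finite_induct) (auto intro: T1 Tmul)

lemma Ppair:
  assumes "v \<in> T" "w \<in> T"
  shows "P ((v^2 - w^2) * ((v^2)^n - (w^2)^n))"
proof -
  have "(v^2)^n - (w^2)^n = (v^2 - w^2) * (\<Sum>i<n. (w^2)^(n - Suc i) * (v^2)^i)"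
    by (rule power_diff_sumr2)
  then have "(v^2 - w^2) * ((v^2)^n - (w^2)^n) = (\<Sum>i<n. (w^(n - Suc i) * v^i)^2 * (v*v - w*w)^2)"
    by (simp add: sum_distrib_left power_mult_distrib power_mult[symmetric] power2_eq_square
        mult.commute mult.left_commute mult.assoc)
  moreover have "P (\<Sum>i<n. (w^(n - Suc i) * v^i)^2 * (v*v - w*w)^2)"
    by (intro Psum Pmul Pbin Tmul Tpow assms)
  ultimately show ?thesis by simp
qed

lemma hurwitz_sq:
  "finite J \<Longrightarrow> u ` J \<subseteq> T \<Longrightarrow>
    P ((\<Sum>j\<in>J. (u j ^ 2) ^ card J) - of_nat (card J) * (\<Prod>j\<in>J. u j ^ 2))"
proof (induction "card J" arbitrary: J rule: nat_less_induct)
  case 1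
  define x where "x = (\<lambda>j. u j ^ 2)"
  define S where "S = (\<lambda>K. (\<Sum>j\<in>K. x j ^ card K) - of_nat (card K) * (\<Prod>j\<in>K. x j))"
  show ?case
  proof (cases "card J \<le> 1")
    case True
    then consider "card J = 0" | "card J = 1" by linarith
    then show ?thesis
    proof cases
      case 1 then show ?thesis using P0 by simp
    next
      case 2 then obtain j where "J = {j}" using card_1_singletonE by blast
      then show ?thesis using P0 by simp
    qed
  next
    case False
    then obtain n where m: "card J = Suc n" and n1: "n \<ge> 1"
      by (metis Suc_le_D le_Suc_eq not_less_eq_eq)
    have fin: "finite J" by fact
    have cardrem: "\<And>i. i \<in> J \<Longrightarrow> card (J - {i}) = n" using m fin by simp
    have IH: "\<And>i. i \<in> J \<Longrightarrow> P (S (J - {i}))"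
      unfolding S_def x_def
      using 1 cardrem m by (metis Diff_subset finite_Diff image_mono lessI subset_trans)
    define D where "D = (\<Sum>i\<in>J. \<Sum>j\<in>J. x i * x j ^ n)"
    define Q where "Q = (\<Sum>j\<in>J. x j ^ Suc n)"
    define Pr where "Pr = (\<Prod>j\<in>J. x j)"
    define A where "A = (\<Sum>i\<in>J. x i * S (J - {i}))"
    define B where "B = (\<Sum>i\<in>J. \<Sum>j\<in>J. (x i - x j) * (x i ^ n - x j ^ n))"
    have hD: "(\<Sum>i\<in>J. x i * (\<Sum>j\<in>J - {i}. x j ^ n)) = D - Q"
    proof -
      have "\<And>i. i \<in> J \<Longrightarrow> x i * (\<Sum>j\<in>J - {i}. x j ^ n) = (\<Sum>j\<in>J. x i * x j ^ n) - x i ^ Suc n"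
      proof -
        fix i assume i: "i \<in> J"
        have "(\<Sum>j\<in>J. x i * x j ^ n) = x i * x i ^ n + (\<Sum>j\<in>J - {i}. x i * x j ^ n)"
          by (rule sum.remove[OF fin i])
        then show "x i * (\<Sum>j\<in>J - {i}. x j ^ n) = (\<Sum>j\<in>J. x i * x j ^ n) - x i ^ Suc n"
          by (simp add: sum_distrib_left)
      qed
      then have "(\<Sum>i\<in>J. x i * (\<Sum>j\<in>J - {i}. x j ^ n)) = (\<Sum>i\<in>J. (\<Sum>j\<in>J. x i * x j ^ n) - x i ^ Suc n)"
        by (rule sum.cong[OF refl])
      then show ?thesis unfolding D_def Q_def by (simp add: sum_subtractf)
    qed
    have hP: "(\<Sum>i\<in>J. x i * (\<Prod>j\<in>J - {i}. x j)) = of_nat (Suc n) * Pr"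
    proof -
      have "\<And>i. i \<in> J \<Longrightarrow> x i * (\<Prod>j\<in>J - {i}. x j) = Pr"
        unfolding Pr_def using fin by (simp add: prod.remove)
      then have "(\<Sum>i\<in>J. x i * (\<Prod>j\<in>J - {i}. x j)) = (\<Sum>i\<in>J. Pr)" by (rule sum.cong[OF refl])
      then show ?thesis using m by simp
    qed
    have hA: "A = D - Q - of_nat n * (of_nat (Suc n) * Pr)"
    proof -
      have "A = (\<Sum>i\<in>J. x i * (\<Sum>j\<in>J - {i}. x j ^ n) - of_nat n * (x i * (\<Prod>j\<in>J - {i}. x j)))"
        unfolding A_def S_def by (intro sum.cong refl) (simp add: cardrem m algebra_simps)
      also have "\<dots> = (D - Q) - of_nat n * (of_nat (Suc n) * Pr)"
        by (simp add: sum_subtractf hD sum_distrib_left[symmetric] hP)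
      finally show ?thesis .
    qed
    have hB: "B = of_nat (2 * Suc n) * Q - 2 * D"
    proof -
      have "B = (\<Sum>i\<in>J. \<Sum>j\<in>J. (x i ^ Suc n + x j ^ Suc n) - (x i * x j ^ n + x j * x i ^ n))"
        unfolding B_def by (intro sum.cong refl) (simp add: algebra_simps)
      also have "\<dots> = (\<Sum>i\<in>J. \<Sum>j\<in>J. x i ^ Suc n) + (\<Sum>i\<in>J. \<Sum>j\<in>J. x j ^ Suc n)
           - (D + (\<Sum>i\<in>J. \<Sum>j\<in>J. x j * x i ^ n))"
        unfolding D_def by (simp add: sum_subtractf sum.distrib)
      also have "(\<Sum>i\<in>J. \<Sum>j\<in>J. x j * x i ^ n) = D"
        unfolding D_def by (rule sum.swap)
      also have "(\<Sum>i\<in>J. \<Sum>j\<in>J. x i ^ Suc n) = of_nat (Suc n) * Q"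
        unfolding Q_def using m by (simp add: sum_distrib_left)
      also have "(\<Sum>i\<in>J. \<Sum>j\<in>J. x j ^ Suc n) = of_nat (Suc n) * Q"
        unfolding Q_def using m by simp
      finally show ?thesis by (simp add: algebra_simps)
    qed
    have SJ: "S J = Q - of_nat (Suc n) * Pr" unfolding S_def Q_def Pr_def m by simp
    have key: "of_nat (2 * n) * S J = (A + A) + B"
      unfolding SJ hA hB by (simp add: algebra_simps)
    have PA: "P A" unfolding A_def
      using IH 1(3) unfolding x_def by (intro Psum) (auto intro: Pmul)
    have PB: "P B" unfolding B_def x_def
      using 1(3) by (intro Psum Ppair) auto
    have "P (of_nat (2 * n) * S J)" unfolding key by (intro Padd PA PB)
    then have "P (S J)" using Pdiv n1 by (metis nat_0_less_mult_iff zero_less_numeral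
        less_le_trans zero_less_one)
    then show ?thesis unfolding S_def x_def .
  qed
qed


lemma hurwitz_pair:
  assumes "u ` {0..<2*d} \<subseteq> T"
  shows "P ((\<Sum>j\<in>{0..<2*d}. u j ^ (2*d)) - of_nat (2*d) * (\<Prod>j\<in>{0..<2*d}. u j))"
proof -
  let ?A = "{0..<d}" and ?B = "{d..<2*d}"
  have TA: "u ` ?A \<subseteq> T" "u ` ?B \<subseteq> T" using assms by auto
  have hA: "P ((\<Sum>j\<in>?A. u j ^ (2*d)) - of_nat d * (\<Prod>j\<in>?A. u j)^2)"
    using hurwitz_sq[of ?A u] TA by (simp add: power_mult prod_power_distrib)
  have hB: "P ((\<Sum>j\<in>?B. u j ^ (2*d)) - of_nat d * (\<Prod>j\<in>?B. u j)^2)"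
    using hurwitz_sq[of ?B u] TA by (simp add: power_mult prod_power_distrib)
  have hC: "P (of_nat d * ((\<Prod>j\<in>?A. u j) - (\<Prod>j\<in>?B. u j))^2)"
    using TA by (intro Pnat Pbin Tprod) auto
  have s: "(\<Sum>j\<in>{0..<2*d}. u j ^ (2*d)) = (\<Sum>j\<in>?A. u j ^ (2*d)) + (\<Sum>j\<in>?B. u j ^ (2*d))"
    by (rule sum.atLeastLessThan_concat[symmetric]) auto
  have p: "(\<Prod>j\<in>{0..<2*d}. u j) = (\<Prod>j\<in>?A. u j) * (\<Prod>j\<in>?B. u j)"
    by (rule prod.atLeastLessThan_concat[symmetric]) auto
  have "(\<Sum>j\<in>{0..<2*d}. u j ^ (2*d)) - of_nat (2*d) * (\<Prod>j\<in>{0..<2*d}. u j)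
     = ((\<Sum>j\<in>?A. u j ^ (2*d)) - of_nat d * (\<Prod>j\<in>?A. u j)^2)
       + ((\<Sum>j\<in>?B. u j ^ (2*d)) - of_nat d * (\<Prod>j\<in>?B. u j)^2)
       + of_nat d * ((\<Prod>j\<in>?A. u j) - (\<Prod>j\<in>?B. u j))^2"
    unfolding s p by (simp add: power2_eq_square algebra_simps)
  then show ?thesis using hA hB hC Padd by metis
qed

end



lemma spow: "Poly_Mapping.single (Poly_Mapping.single i (1::nat)) (c::real) ^ k
   = Poly_Mapping.single (Poly_Mapping.single i k) (c ^ k)"
proof (induction k)
  case 0 then show ?case by simp
next
  case (Suc k)
  have "Poly_Mapping.single (Poly_Mapping.single i (1::nat)) c ^ Suc k
      = Poly_Mapping.single (Poly_Mapping.single i 1) c * Poly_Mapping.single (Poly_Mapping.single i k) (c ^ k)"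
    by (simp only: power_Suc Suc)
  also have "\<dots> = Poly_Mapping.single (Poly_Mapping.single i 1 + Poly_Mapping.single i k) (c * c ^ k)"
    by (rule mult_single)
  also have "Poly_Mapping.single i 1 + Poly_Mapping.single i k = Poly_Mapping.single i (Suc k)"
    by (simp add: single_add[symmetric])
  finally show ?case by simp
qed

lemma nat_mult_single: "(of_nat m :: mpoly) * Poly_Mapping.single V x = Poly_Mapping.single V (real m * x)"
proof -
  have "(of_nat m :: mpoly) = Poly_Mapping.single 0 (real m)" by simp
  then show ?thesis by (simp add: mult_single del: single_of_nat)
qed

lemma prod_single: "(\<Prod>i\<in>A. Poly_Mapping.single (g i) (c i) :: mpoly)
   = Poly_Mapping.single (\<Sum>i\<in>A. g i) (\<Prod>i\<in>A. c i)"
  by (induction A rule: infinite_finite_induct) (simp_all add: mult_single)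

lemma alpha_decomp:
  assumes "in_vars n \<alpha>"
  shows "(\<Sum>i<n. Poly_Mapping.single i (Poly_Mapping.lookup \<alpha> i)) = \<alpha>"
proof (rule poly_mapping_eqI)
  fix k
  have "Poly_Mapping.lookup (\<Sum>i<n. Poly_Mapping.single i (Poly_Mapping.lookup \<alpha> i)) k = (\<Sum>i<n. if i = k then Poly_Mapping.lookup \<alpha> i else 0)"
    by (simp add: lookup_sum lookup_single when_def)
  also have "\<dots> = Poly_Mapping.lookup \<alpha> k"
    using assms unfolding in_vars_def by (auto simp: in_keys_iff)
  finally show "Poly_Mapping.lookup (\<Sum>i<n. Poly_Mapping.single i (Poly_Mapping.lookup \<alpha> i)) k = Poly_Mapping.lookup \<alpha> k" .
qed

lemma mdeg_vars:
  assumes "in_vars n \<alpha>"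
  shows "mdeg \<alpha> = (\<Sum>i<n. Poly_Mapping.lookup \<alpha> i)"
  unfolding mdeg_def
  by (rule sum.mono_neutral_left) (use assms in \<open>auto simp: in_vars_def in_keys_iff\<close>)

definition LL :: "(nat \<Rightarrow> nat) \<Rightarrow> nat \<Rightarrow> nat list" where
  "LL k n = concat (map (\<lambda>i. replicate (k i) i) [0..<n])"

lemma LL_0: "LL k 0 = []"
  by (simp add: LL_def)

lemma LL_Suc: "LL k (Suc n) = LL k n @ replicate (k n) n"
  by (simp add: LL_def)

lemma LL_length: "length (LL k n) = (\<Sum>i<n. k i)"
  by (induction n) (simp_all add: LL_def)

lemma LL_set: "set (LL k n) \<subseteq> {..<n}"
  by (auto simp: LL_def)

lemma LL_sum: "sum_list (map g (LL k n)) = (\<Sum>i<n. of_nat (k i) * g i)"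
  by (induction n) (simp_all add: LL_0 LL_Suc sum_list_replicate)

lemma LL_prod: "prod_list (map g (LL k n)) = (\<Prod>i<n. g i ^ k i)"
  by (induction n) (simp_all add: LL_0 LL_Suc)

lemma hurwitz_mpoly:
  assumes "in_vars n \<alpha>" "mdeg \<alpha> = 2*d"
  shows "SOBS n ((\<Sum>i<n. Poly_Mapping.single (Poly_Mapping.single i (2*d)) (real (Poly_Mapping.lookup \<alpha> i) * s i ^ (2*d)))
     - of_nat (2*d) * Poly_Mapping.single \<alpha> (\<Prod>i<n. s i ^ Poly_Mapping.lookup \<alpha> i))"
proof -
  define l where "l = LL (Poly_Mapping.lookup \<alpha>) n"
  define h where "h = (\<lambda>i. Poly_Mapping.single (Poly_Mapping.single i (1::nat)) (s i) :: mpoly)"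
  define u where "u = (\<lambda>j. h (l ! j))"
  define T where "T = {Poly_Mapping.single \<gamma> c :: mpoly | \<gamma> c. in_vars n \<gamma>}"
  have len: "length l = 2*d" unfolding l_def LL_length using assms mdeg_vars by simp
  have uT: "u ` {0..<2*d} \<subseteq> T"
  proof
    fix y assume "y \<in> u ` {0..<2*d}"
    then obtain j where j: "j < length l" "y = u j" using len by auto
    have "l ! j < n" using LL_set j(1) nth_mem unfolding l_def by blast
    then have "in_vars n (Poly_Mapping.single (l ! j) 1)" unfolding in_vars_def by simp
    then show "y \<in> T" unfolding T_def j(2) u_def h_def by blast
  qed
  have H: "SOBS n ((\<Sum>j\<in>{0..<2*d}. u j ^ (2*d)) - of_nat (2*d) * (\<Prod>j\<in>{0..<2*d}. u j))"
  proof (rule hurwitz_pair[where P="SOBS n" and T=T, OF _ _ _ _ _ _ _ uT])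
    show "SOBS n 0" by (rule SOBS_0)
    show "\<And>a b. SOBS n a \<Longrightarrow> SOBS n b \<Longrightarrow> SOBS n (a + b)" by (rule SOBS_add)
    show "\<And>k a. 0 < k \<Longrightarrow> SOBS n (of_nat k * a) \<Longrightarrow> SOBS n a" by (rule SOBS_div)
    show "\<And>w a. w \<in> T \<Longrightarrow> SOBS n a \<Longrightarrow> SOBS n (w\<^sup>2 * a)"
    proof -
      fix w a assume "w \<in> T" "SOBS n a"
      then obtain \<gamma> c where "w = Poly_Mapping.single \<gamma> c" "in_vars n \<gamma>" unfolding T_def by blast
      then show "SOBS n (w\<^sup>2 * a)" using SOBS_mulsq \<open>SOBS n a\<close> by simp
    qed
    show "\<And>v w. v \<in> T \<Longrightarrow> w \<in> T \<Longrightarrow> SOBS n ((v - w)\<^sup>2)"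
    proof -
      fix v w assume "v \<in> T" "w \<in> T"
      then obtain \<gamma> c \<gamma>' c' where "v = Poly_Mapping.single \<gamma> c" "in_vars n \<gamma>"
        "w = Poly_Mapping.single \<gamma>' c'" "in_vars n \<gamma>'" unfolding T_def by blast
      then show "SOBS n ((v - w)\<^sup>2)" using SOBS_bin by simp
    qed
    show "1 \<in> T" unfolding T_def
    proof (intro CollectI exI conjI)
      show "1 = Poly_Mapping.single 0 (1::real)" by simp
    qed (rule in_vars_0)
    show "\<And>v w. v \<in> T \<Longrightarrow> w \<in> T \<Longrightarrow> v * w \<in> T"
    proof -
      fix v w assume "v \<in> T" "w \<in> T"
      then obtain \<gamma> c \<gamma>' c' where "v = Poly_Mapping.single \<gamma> c" "in_vars n \<gamma>"
        "w = Poly_Mapping.single \<gamma>' c'" "in_vars n \<gamma>'" unfolding T_def by blast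
      then show "v * w \<in> T" unfolding T_def by (auto simp: mult_single intro: in_vars_add)
    qed
  qed
  have e1: "(\<Sum>j\<in>{0..<2*d}. u j ^ (2*d)) = (\<Sum>i<n. Poly_Mapping.single (Poly_Mapping.single i (2*d)) (real (Poly_Mapping.lookup \<alpha> i) * s i ^ (2*d)))"
  proof -
    have "(\<Sum>j\<in>{0..<2*d}. u j ^ (2*d)) = sum_list (map (\<lambda>i. h i ^ (2*d)) l)"
      unfolding sum.list_conv_set_nth len u_def by (intro sum.cong) (auto simp: len)
    also have "\<dots> = (\<Sum>i<n. of_nat (Poly_Mapping.lookup \<alpha> i) * h i ^ (2*d))"
      unfolding l_def LL_sum ..
    also have "\<dots> = (\<Sum>i<n. Poly_Mapping.single (Poly_Mapping.single i (2*d)) (real (Poly_Mapping.lookup \<alpha> i) * s i ^ (2*d)))"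
      unfolding h_def spow nat_mult_single ..
    finally show ?thesis .
  qed
  have e2: "(\<Prod>j\<in>{0..<2*d}. u j) = Poly_Mapping.single \<alpha> (\<Prod>i<n. s i ^ Poly_Mapping.lookup \<alpha> i)"
  proof -
    have "(\<Prod>j\<in>{0..<2*d}. u j) = prod_list (map h l)"
      unfolding prod.list_conv_set_nth len u_def by (intro prod.cong) (auto simp: len)
    also have "\<dots> = (\<Prod>i<n. h i ^ Poly_Mapping.lookup \<alpha> i)"
      unfolding l_def LL_prod ..
    also have "\<dots> = (\<Prod>i<n. Poly_Mapping.single (Poly_Mapping.single i (Poly_Mapping.lookup \<alpha> i)) (s i ^ Poly_Mapping.lookup \<alpha> i))"
      unfolding h_def spow ..
    also have "\<dots> = Poly_Mapping.single \<alpha> (\<Prod>i<n. s i ^ Poly_Mapping.lookup \<alpha> i)"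
      unfolding prod_single alpha_decomp[OF assms(1)] ..
    finally show ?thesis .
  qed
  show ?thesis using H unfolding e1 e2 .
qed



lemma sq_term:
  assumes "in_vars n \<gamma>" "c \<ge> 0"
  shows "SOBS n (Poly_Mapping.single (\<gamma> + \<gamma>) c)"
proof -
  have "(Poly_Mapping.single \<gamma> (sqrt c) - Poly_Mapping.single 0 0)^2 = Poly_Mapping.single (\<gamma> + \<gamma>) c"
    using assms(2) by (simp add: power2_eq_square mult_single)
  then show ?thesis using SOBS_bin[OF assms(1) in_vars_0, of "sqrt c" 0] by simp
qed

lemma sq_var:
  assumes "i < n" "c \<ge> 0"
  shows "SOBS n (Poly_Mapping.single (Poly_Mapping.single i (2*d)) c)"
proof -
  have "in_vars n (Poly_Mapping.single i d)" using assms(1) by (simp add: in_vars_def)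
  moreover have "Poly_Mapping.single i d + Poly_Mapping.single i d = Poly_Mapping.single i (2*d)"
    by (simp add: single_add[symmetric] mult_2)
  ultimately show ?thesis using sq_term assms(2) by metis
qed

lemma agiform:
  assumes d: "d \<ge> 1" and av: "in_vars n \<alpha>" and deg: "mdeg \<alpha> = 2*d"
    and a_nn: "\<forall>i<n. a i \<ge> 0" and c0: "c \<noteq> 0"
    and eq: "real (2*d) ^ (2*d) * vpow n a \<alpha> = c ^ (2*d) * vpow n (\<lambda>i. real (Poly_Mapping.lookup \<alpha> i)) \<alpha>"
    and sgn: "c < 0 \<or> (\<exists>i. odd (Poly_Mapping.lookup \<alpha> i))"
  shows "SOBS n ((\<Sum>i<n. Poly_Mapping.single (Poly_Mapping.single i (2*d)) (a i)) + Poly_Mapping.single \<alpha> c)"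
proof -
  define al where "al = (\<lambda>i. real (Poly_Mapping.lookup \<alpha> i))"
  define t where "t = (\<lambda>i. root (2*d) (a i / al i))"
  define k where "k = (SOME i. odd (Poly_Mapping.lookup \<alpha> i))"
  define e where "e = (\<lambda>i. if c > 0 \<and> i = k then -1 else (1::real))"
  define s where "s = (\<lambda>i. e i * t i)"
  have dpos: "0 < 2*d" using d by simp
  have ht: "\<And>i. i < n \<Longrightarrow> t i ^ (2*d) = a i / al i"
    unfolding t_def using a_nn dpos by (simp add: al_def)
  have t0: "\<And>i. i < n \<Longrightarrow> t i \<ge> 0"
    unfolding t_def al_def using a_nn by (intro real_root_ge_zero divide_nonneg_nonneg) auto
  have hs: "\<And>i. s i ^ (2*d) = t i ^ (2*d)"
    unfolding s_def e_def by (simp add: power_mult_distrib power_mult)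
  have coef: "\<And>i. i < n \<Longrightarrow> al i * s i ^ (2*d) \<le> a i"
    using a_nn by (simp add: hs ht al_def)
  have alpos: "vpow n al \<alpha> > 0"
    unfolding vpow_def al_def
    by (intro prod_pos) (auto simp: zero_less_power_eq)
  have "(\<Prod>i<n. t i ^ Poly_Mapping.lookup \<alpha> i) ^ (2*d) = (\<Prod>i<n. (a i / al i) ^ Poly_Mapping.lookup \<alpha> i)"
  proof -
    have "(\<Prod>i<n. t i ^ Poly_Mapping.lookup \<alpha> i) ^ (2*d) = (\<Prod>i<n. (t i ^ (2*d)) ^ Poly_Mapping.lookup \<alpha> i)"
      unfolding prod_power_distrib by (intro prod.cong refl) (simp only: power_mult[symmetric] mult.commute)
    also have "\<dots> = (\<Prod>i<n. (a i / al i) ^ Poly_Mapping.lookup \<alpha> i)"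
      by (intro prod.cong refl) (simp add: ht)
    finally show ?thesis .
  qed
  also have "\<dots> = vpow n a \<alpha> / vpow n al \<alpha>"
    unfolding vpow_def by (simp add: power_divide prod_dividef)
  also have "\<dots> = (\<bar>c\<bar> / real (2*d)) ^ (2*d)"
  proof -
    have "vpow n a \<alpha> = c ^ (2*d) * vpow n al \<alpha> / real (2*d) ^ (2*d)"
      using eq dpos unfolding al_def by (simp add: field_simps)
    then show ?thesis using alpos by (simp add: power_divide power_even_abs)
  qed
  finally have pt: "(\<Prod>i<n. t i ^ Poly_Mapping.lookup \<alpha> i) = \<bar>c\<bar> / real (2*d)"
    by (rule power_eq_imp_eq_base) (use t0 dpos in \<open>auto intro: prod_nonneg\<close>)
  have pe: "(\<Prod>i<n. e i ^ Poly_Mapping.lookup \<alpha> i) = (if c > 0 then -1 else 1)"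
  proof (cases "c > 0")
    case True
    then have ok: "odd (Poly_Mapping.lookup \<alpha> k)" unfolding k_def using sgn by (metis not_less_iff_gr_or_eq someI_ex)
    then have "Poly_Mapping.lookup \<alpha> k \<noteq> 0" using odd_pos[OF ok] by simp
    then have "k \<in> Poly_Mapping.keys \<alpha>" by (simp add: in_keys_iff)
    then have kn: "k < n" using av unfolding in_vars_def by auto
    have "(\<Prod>i<n. e i ^ Poly_Mapping.lookup \<alpha> i) = e k ^ Poly_Mapping.lookup \<alpha> k * (\<Prod>i\<in>{..<n} - {k}. e i ^ Poly_Mapping.lookup \<alpha> i)"
      using kn by (simp add: prod.remove)
    also have "(\<Prod>i\<in>{..<n} - {k}. e i ^ Poly_Mapping.lookup \<alpha> i) = 1"
      by (intro prod.neutral) (auto simp: e_def)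
    finally show ?thesis using True ok by (simp add: e_def)
  next
    case False
    then show ?thesis by (simp add: e_def)
  qed
  have ps: "(\<Prod>i<n. s i ^ Poly_Mapping.lookup \<alpha> i) = - c / real (2*d)"
  proof -
    have "(\<Prod>i<n. s i ^ Poly_Mapping.lookup \<alpha> i) = (\<Prod>i<n. e i ^ Poly_Mapping.lookup \<alpha> i) * (\<Prod>i<n. t i ^ Poly_Mapping.lookup \<alpha> i)"
      unfolding s_def by (simp add: power_mult_distrib prod.distrib)
    then show ?thesis using c0 unfolding pe pt by (auto simp: abs_if)
  qed
  have H: "SOBS n ((\<Sum>i<n. Poly_Mapping.single (Poly_Mapping.single i (2*d)) (al i * s i ^ (2*d)))
     - of_nat (2*d) * Poly_Mapping.single \<alpha> (\<Prod>i<n. s i ^ Poly_Mapping.lookup \<alpha> i))"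
    using hurwitz_mpoly[OF av deg, of s] unfolding al_def .
  have e2: "of_nat (2*d) * Poly_Mapping.single \<alpha> (\<Prod>i<n. s i ^ Poly_Mapping.lookup \<alpha> i) = - Poly_Mapping.single \<alpha> c"
    unfolding ps nat_mult_single using dpos by (simp add: single_uminus[symmetric])
  have R: "SOBS n (\<Sum>i<n. Poly_Mapping.single (Poly_Mapping.single i (2*d)) (a i - al i * s i ^ (2*d)))"
    using coef by (intro SOBS_sum sq_var) auto
  have "(\<Sum>i<n. Poly_Mapping.single (Poly_Mapping.single i (2*d)) (a i)) + Poly_Mapping.single \<alpha> c
     = ((\<Sum>i<n. Poly_Mapping.single (Poly_Mapping.single i (2*d)) (al i * s i ^ (2*d)))
     - of_nat (2*d) * Poly_Mapping.single \<alpha> (\<Prod>i<n. s i ^ Poly_Mapping.lookup \<alpha> i))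
     + (\<Sum>i<n. Poly_Mapping.single (Poly_Mapping.single i (2*d)) (a i - al i * s i ^ (2*d)))"
    unfolding e2 by (simp add: single_diff sum_subtractf)
  then show ?thesis using SOBS_add[OF H R] by simp
qed


lemma expand_poly: "(f::mpoly) = (\<Sum>\<beta>\<in>Poly_Mapping.keys f. Poly_Mapping.single \<beta> (Poly_Mapping.lookup f \<beta>))"
proof (rule poly_mapping_eqI)
  fix k
  have "Poly_Mapping.lookup (\<Sum>\<beta>\<in>Poly_Mapping.keys f. Poly_Mapping.single \<beta> (Poly_Mapping.lookup f \<beta>)) k
     = (\<Sum>\<beta>\<in>Poly_Mapping.keys f. if \<beta> = k then Poly_Mapping.lookup f \<beta> else 0)"
    by (simp add: lookup_sum lookup_single when_def)
  also have "\<dots> = Poly_Mapping.lookup f k" by (auto simp: in_keys_iff)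
  finally show "Poly_Mapping.lookup f k = Poly_Mapping.lookup (\<Sum>\<beta>\<in>Poly_Mapping.keys f. Poly_Mapping.single \<beta> (Poly_Mapping.lookup f \<beta>)) k" by simp
qed

lemma single_sum: "Poly_Mapping.single k (\<Sum>x\<in>A. h x) = (\<Sum>x\<in>A. Poly_Mapping.single k (h x) :: mpoly)"
  by (induction A rule: infinite_finite_induct) (simp_all add: single_add)

lemma mdeg_zero:
  assumes "mdeg \<alpha> = 0" shows "\<alpha> = 0"
proof -
  have "\<forall>i\<in>Poly_Mapping.keys \<alpha>. Poly_Mapping.lookup \<alpha> i = 0"
    using assms unfolding mdeg_def by (simp add: sum_eq_0_iff)
  then have "\<forall>i. Poly_Mapping.lookup \<alpha> i = 0" by (metis in_keys_iff)
  then show ?thesis by (intro poly_mapping_eqI) simp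
qed

lemma half_term:
  assumes "in_vars n \<beta>" "\<forall>i. even (Poly_Mapping.lookup \<beta> i)"
  obtains \<gamma> where "in_vars n \<gamma>" "\<gamma> + \<gamma> = \<beta>"
proof
  define \<gamma> where "\<gamma> = (\<Sum>i<n. Poly_Mapping.single i (Poly_Mapping.lookup \<beta> i div 2))"
  show "in_vars n \<gamma>" unfolding in_vars_def
  proof
    fix k assume "k \<in> Poly_Mapping.keys \<gamma>"
    then have "Poly_Mapping.lookup \<gamma> k \<noteq> 0" by (simp add: in_keys_iff)
    then show "k \<in> {..<n}" unfolding \<gamma>_def by (auto simp: lookup_sum lookup_single when_def split: if_splits)
  qed
  have "\<gamma> + \<gamma> = (\<Sum>i<n. Poly_Mapping.single i (Poly_Mapping.lookup \<beta> i))"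
    unfolding \<gamma>_def sum.distrib[symmetric] single_add[symmetric]
    using assms(2) by (intro sum.cong refl) (metis add_self_div_2 even_two_times_div_two mult_2)
  then show "\<gamma> + \<gamma> = \<beta>" using alpha_decomp[OF assms(1)] by simp
qed

theorem theorem2p3:
  fixes n d :: nat and f :: mpoly and a :: "(nat \<Rightarrow>\<^sub>0 nat) \<Rightarrow> nat \<Rightarrow> real"
  assumes "n \<ge> 1"
    and "is_poly_in n f"
    and "is_form (2*d) f"
    and "\<forall>\<alpha>\<in>Delta n d f. \<forall>i<n. a \<alpha> i \<ge> 0"
    and "\<forall>\<alpha>\<in>Delta n d f. real (2*d) ^ (2*d) * vpow n (a \<alpha>) \<alpha>
            = (Poly_Mapping.lookup f \<alpha>) ^ (2*d) * vpow n (\<lambda>i. real (Poly_Mapping.lookup \<alpha> i)) \<alpha>"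
    and "\<forall>i<n. Poly_Mapping.lookup f (Poly_Mapping.single i (2*d)) \<ge> (\<Sum>\<alpha>\<in>Delta n d f. a \<alpha> i)"
  shows "SOBS n f"
proof (cases "d = 0")
  case True
  have ks: "Poly_Mapping.keys f \<subseteq> {0}"
    using assms(3) True unfolding is_form_def by (auto intro: mdeg_zero)
  then have De: "Delta n d f = {}" unfolding Delta_def Omega_def by auto
  have f0: "f = Poly_Mapping.single (0 + 0) (Poly_Mapping.lookup f 0)"
    by (subst expand_poly) (use ks in \<open>auto simp: subset_singleton_iff\<close>)
  have "Poly_Mapping.lookup f (Poly_Mapping.single 0 (2*d)) \<ge> (\<Sum>\<alpha>\<in>Delta n d f. a \<alpha> 0)"
    using assms(6) assms(1) by simp
  then have "Poly_Mapping.lookup f 0 \<ge> 0" using True De by simp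
  then show ?thesis using sq_term[OF in_vars_0] f0 by metis
next
  case False
  then have d: "d \<ge> 1" by simp
  let ?g = "\<lambda>\<beta>. Poly_Mapping.single \<beta> (Poly_Mapping.lookup f \<beta>)"
  let ?X = "\<lambda>i. Poly_Mapping.single i (2*d)"
  define V where "V = ?X ` {..<n}"
  let ?K = "Poly_Mapping.keys f"
  let ?O = "Omega n d f" and ?D = "Delta n d f"
  have m0: "mdeg 0 = 0" by (simp add: mdeg_def)
  have z: "0 \<notin> ?K"
  proof
    assume "0 \<in> ?K"
    then have "mdeg 0 = 2*d" using assms(3) unfolding is_form_def by blast
    then show False using m0 d by simp
  qed
  have Veq: "{Poly_Mapping.single i (2*d) | i. i < n} = V" unfolding V_def by blast
  have Oeq: "?O = ?K - V" unfolding Omega_def Veq using z by blast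
  have DO: "?D \<subseteq> ?O" unfolding Delta_def by blast
  have finO: "finite ?O" unfolding Oeq by simp
  have inj: "inj_on ?X {..<n}"
  proof
    fix i j assume "?X i = ?X j"
    then have "Poly_Mapping.lookup (?X i) i = Poly_Mapping.lookup (?X j) i" by simp
    then show "i = j" using d by (cases "i = j") (auto simp: lookup_single)
  qed
  have s1: "sum ?g ?K = sum ?g (?K \<inter> V) + sum ?g ?O"
  proof -
    have "sum ?g ?K = sum ?g ((?K \<inter> V) \<union> (?K - V))" by (simp only: Int_Diff_Un)
    also have "\<dots> = sum ?g (?K \<inter> V) + sum ?g (?K - V)" by (rule sum.union_disjoint) auto
    finally show ?thesis unfolding Oeq .
  qed
  have s2: "sum ?g (?K \<inter> V) = sum ?g V"
  proof (rule sum.mono_neutral_left)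
    show "finite V" unfolding V_def by simp
    show "?K \<inter> V \<subseteq> V" by (rule Int_lower2)
    show "\<forall>x\<in>V - ?K \<inter> V. ?g x = 0"
    proof
      fix x assume "x \<in> V - ?K \<inter> V"
      then have "x \<notin> ?K" by blast
      then have "Poly_Mapping.lookup f x = 0" using in_keys_iff by metis
      then show "?g x = 0" by simp
    qed
  qed
  have s3: "sum ?g V = (\<Sum>i<n. ?g (?X i))"
    unfolding V_def sum.reindex[OF inj] o_def ..
  have s4: "sum ?g ?O = sum ?g ?D + sum ?g (?O - ?D)"
    unfolding sum.subset_diff[OF DO finO] by (rule add.commute)
  define R1s where "R1s = (\<Sum>i<n. Poly_Mapping.single (?X i) (Poly_Mapping.lookup f (?X i) - (\<Sum>\<alpha>\<in>?D. a \<alpha> i)))"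
  define W where "W = (\<Sum>\<alpha>\<in>?D. \<Sum>i<n. Poly_Mapping.single (?X i) (a \<alpha> i))"
  have s5: "(\<Sum>i<n. ?g (?X i)) = R1s + W"
  proof -
    have "(\<Sum>i<n. ?g (?X i)) = (\<Sum>i<n. Poly_Mapping.single (?X i) (Poly_Mapping.lookup f (?X i) - (\<Sum>\<alpha>\<in>?D. a \<alpha> i))
        + Poly_Mapping.single (?X i) (\<Sum>\<alpha>\<in>?D. a \<alpha> i))"
      by (intro sum.cong refl) (simp only: single_add[symmetric] diff_add_cancel)
    also have "\<dots> = R1s + (\<Sum>i<n. Poly_Mapping.single (?X i) (\<Sum>\<alpha>\<in>?D. a \<alpha> i))"
      unfolding R1s_def by (rule sum.distrib)
    also have "(\<Sum>i<n. Poly_Mapping.single (?X i) (\<Sum>\<alpha>\<in>?D. a \<alpha> i)) = W"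
      unfolding W_def single_sum by (rule sum.swap)
    finally show ?thesis .
  qed
  have s6: "(\<Sum>\<alpha>\<in>?D. (\<Sum>i<n. Poly_Mapping.single (?X i) (a \<alpha> i)) + ?g \<alpha>) = W + sum ?g ?D"
    unfolding W_def by (rule sum.distrib)
  have fe: "f = R1s + sum ?g (?O - ?D) + (\<Sum>\<alpha>\<in>?D. (\<Sum>i<n. Poly_Mapping.single (?X i) (a \<alpha> i)) + ?g \<alpha>)"
  proof -
    have "f = sum ?g ?K" by (rule expand_poly)
    also have "\<dots> = (R1s + W) + (sum ?g ?D + sum ?g (?O - ?D))" unfolding s1 s2 s3 s4 s5 ..
    also have "\<dots> = R1s + sum ?g (?O - ?D) + (W + sum ?g ?D)" by (simp only: add_ac)
    finally show ?thesis unfolding s6 .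
  qed
  have R1: "SOBS n R1s"
    unfolding R1s_def using assms(6) by (intro SOBS_sum sq_var) auto
  have R2: "SOBS n (sum ?g (?O - ?D))"
  proof (rule SOBS_sum)
    fix \<beta> assume b: "\<beta> \<in> ?O - ?D"
    then have bk: "\<beta> \<in> ?K" unfolding Oeq by simp
    have bv: "in_vars n \<beta>" using assms(2) bk unfolding is_poly_in_def by blast
    have bO: "\<beta> \<in> ?O" "\<beta> \<notin> ?D" using b by blast+
    then have nn: "\<not> (Poly_Mapping.lookup f \<beta> < 0 \<or> (\<exists>i. odd (Poly_Mapping.lookup \<beta> i)))"
      unfolding Delta_def by blast
    have "\<not> Poly_Mapping.lookup f \<beta> < 0" "\<forall>i. even (Poly_Mapping.lookup \<beta> i)"
      using nn by blast+
    moreover obtain \<gamma> where "in_vars n \<gamma>" "\<gamma> + \<gamma> = \<beta>"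
      using half_term[OF bv] calculation(2) by blast
    ultimately show "SOBS n (?g \<beta>)" using sq_term[of n \<gamma> "Poly_Mapping.lookup f \<beta>"] by simp
  qed
  have R3: "SOBS n (\<Sum>\<alpha>\<in>?D. (\<Sum>i<n. Poly_Mapping.single (?X i) (a \<alpha> i)) + ?g \<alpha>)"
  proof (rule SOBS_sum)
    fix \<alpha> assume al: "\<alpha> \<in> ?D"
    then have ak: "\<alpha> \<in> ?K" using DO unfolding Oeq by auto
    show "SOBS n ((\<Sum>i<n. Poly_Mapping.single (?X i) (a \<alpha> i)) + ?g \<alpha>)"
    proof (rule agiform[OF d])
      show "in_vars n \<alpha>" using assms(2) ak unfolding is_poly_in_def by blast
      show "mdeg \<alpha> = 2*d" using assms(3) ak unfolding is_form_def by blast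
      show "\<forall>i<n. 0 \<le> a \<alpha> i" using assms(4) al by blast
      show "Poly_Mapping.lookup f \<alpha> \<noteq> 0" using ak by (simp add: in_keys_iff)
      show "real (2*d) ^ (2*d) * vpow n (a \<alpha>) \<alpha> = Poly_Mapping.lookup f \<alpha> ^ (2*d) * vpow n (\<lambda>i. real (Poly_Mapping.lookup \<alpha> i)) \<alpha>"
        using assms(5) al by blast
      show "Poly_Mapping.lookup f \<alpha> < 0 \<or> (\<exists>i. odd (Poly_Mapping.lookup \<alpha> i))"
        using al unfolding Delta_def by blast
    qed
  qed
  show ?thesis using SOBS_add[OF SOBS_add[OF R1 R2] R3] unfolding fe[symmetric] .
qed

end
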